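(* Assume the no-anticipation, common-support and transition-independence conditions stated in the context. Then for every $t=T_0+1,\dots,T$, \[ \boldsymbol\mu^{\mathrm{DiD}}_t-\boldsymbol\mu^{\mathrm{ATT}}_t=\sum_{\mathbf x_1^{T_0}\in\mathcal X^{T_0}}\mathbb{E}\big[\mathbf X_t-\mathbf x_{T_0}\mid \mathbf X_1^{T_0}=\mathbf x_1^{T_0},D=0\big]\Big\{\Pr(\mathbf X_1^{T_0}=\mathbf x_1^{T_0}\mid D=1)-\Pr(\mathbf X_1^{T_0}=\mathbf x_1^{T_0}\mid D=0)\Big\}, \] where $\mathbf x_{T_0}$ denotes the last component of $\mathbf x_1^{T_0}=(\mathbf x_1,\dots,\mathbf x_{T_0})$.
   Context: Fix integers $T_0\ge1$, $T_1\ge1$, $T=T_0+T_1$, $K\ge2$, and outcome categories $\mathcal Y=\{\bar y^{(1)},\dots,\bar y^{(K)}\}$. On a probability space, a unit has a treatment indicator $D\in\{0,1\}$ (treated units are untreated in periods $1,\dots,T_0$ and treated in periods $T_0+1,\dots,T$; control units are never treated) and potential outcomes $Y_t(0),Y_t(1)\in\mathcal Y$, $t=1,\dots,T$. For $d\in\{0,1\}$ let $\mathbf X_t(d)=(\mathbf 1(Y_t(d)=\bar y^{(1)}),\dots,\mathbf 1(Y_t(d)=\bar y^{(K)}))^\top\in\mathcal X:=\{x\in\{0,1\}^K:\sum_k x^{(k)}=1\}$. Observed outcomes: $\mathbf X_t=\mathbf X_t(0)$ for $t\le T_0$, $\mathbf X_t=D\mathbf X_t(1)+(1-D)\mathbf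 X_t(0)$ for $t\ge T_0+1$. Write $\mathbf X_1^{T_0}=(\mathbf X_1,\dots,\mathbf X_{T_0})$, $\mathbf X_1^{T_0}(0)=(\mathbf X_1(0),\dots,\mathbf X_{T_0}(0))$. For $t\ge T_0+1$: $\boldsymbol\mu^{\mathrm{ATT}}_t=\mathbb{E}[\mathbf X_t(1)-\mathbf X_t(0)\mid D=1]$ and $\boldsymbol\mu^{\mathrm{DiD}}_t=\mathbb{E}[\mathbf X_t-\mathbf X_{T_0}\mid D=1]-\mathbb{E}[\mathbf X_t-\mathbf X_{T_0}\mid D=0]$. Conditional quantities are taken only given events of positive probability. No anticipation: $\mathbf X_t(1)=\mathbf X_t(0)$ for $t\le T_0$. Common support: there is $\epsilon>0$ with $\epsilon\le\Pr(D=1\mid\mathbf X_1^{T_0}=\mathbf x_1^{T_0})<1-\epsilon$ for every $\mathbf x_1^{T_0}$ with $\Pr(\mathbf X_1^{T_0}=\mathbf x_1^{T_0})>0$. Transition independence: for every $t\ge T_0+1$, $\mathbf x_t\in\mathcal X$, $\mathbf x_1^{T_0}\in\mathcal X^{T_0}$: $\Pr(\mathbf X_t(0)=\mathbf x_t\mid \mathbf X_1^{T_0}(0)=\mathbf x_1^{T_0},D=1)=\Pr(\mathbf X_t(0)=\mathbf x_t\mid \mathbf X_1^{T_0}(0)=\mathbf x_1^{T_0},D=0)$. *)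

theory Defs
  imports "HOL-Probability.Probability"
begin

text \<open>Outcome categories are the elements of a finite type 'k (K = CARD('k)).
  The one-hot encoding of a category is a vector in real^'k.\<close>

definition ind_vec :: "'k::finite \<Rightarrow> real^'k" where
  "ind_vec y = (\<chi> k. if y = k then 1 else 0)"

definition Yobs :: "nat \<Rightarrow> ('a \<Rightarrow> bool) \<Rightarrow> (nat \<Rightarrow> 'a \<Rightarrow> 'k) \<Rightarrow> (nat \<Rightarrow> 'a \<Rightarrow> 'k)
    \<Rightarrow> nat \<Rightarrow> 'a \<Rightarrow> 'k" where
  "Yobs T0 D Y0 Y1 t \<omega> = (if t \<le> T0 then Y0 t \<omega> else if D \<omega> then Y1 t \<omega> else Y0 t \<omega>)"

definition Xobs :: "nat \<Rightarrow> ('a \<Rightarrow> bool) \<Rightarrow> (nat \<Rightarrow> 'a \<Rightarrow> 'k::finite) \<Rightarrow> (nat \<Rightarrow> 'a \<Rightarrow> 'k)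
    \<Rightarrow> nat \<Rightarrow> 'a \<Rightarrow> real^'k" where
  "Xobs T0 D Y0 Y1 t \<omega> = ind_vec (Yobs T0 D Y0 Y1 t \<omega>)"

text \<open>Pre-treatment histories x_1^{T0} in X^{T0}, represented by their categories.\<close>
definition histories :: "nat \<Rightarrow> (nat \<Rightarrow> 'k) set" where
  "histories T0 = PiE {1..T0} (\<lambda>_. UNIV)"

definition hist_event :: "'a measure \<Rightarrow> (nat \<Rightarrow> 'a \<Rightarrow> 'k) \<Rightarrow> nat \<Rightarrow> (nat \<Rightarrow> 'k) \<Rightarrow> 'a set" where
  "hist_event M Y T0 h = {\<omega> \<in> space M. \<forall>s\<in>{1..T0}. Y s \<omega> = h s}"

definition cprob :: "'a measure \<Rightarrow> 'a set \<Rightarrow> 'a set \<Rightarrow> real" where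
  "cprob M A B = measure M (A \<inter> B) / measure M B"

definition cexp :: "'a measure \<Rightarrow> ('a \<Rightarrow> real^'k) \<Rightarrow> 'a set \<Rightarrow> real^'k" where
  "cexp M X B = (1 / measure M B) *\<^sub>R (\<integral>\<omega>. indicator B \<omega> *\<^sub>R X \<omega> \<partial>M)"

definition treated :: "'a measure \<Rightarrow> ('a \<Rightarrow> bool) \<Rightarrow> 'a set" where
  "treated M D = {\<omega> \<in> space M. D \<omega>}"

definition control :: "'a measure \<Rightarrow> ('a \<Rightarrow> bool) \<Rightarrow> 'a set" where
  "control M D = {\<omega> \<in> space M. \<not> D \<omega>}"

definition mu_ATT :: "'a measure \<Rightarrow> ('a \<Rightarrow> bool) \<Rightarrow> (nat \<Rightarrow> 'a \<Rightarrow> 'k::finite) \<Rightarrow> (nat \<Rightarrow> 'a \<Rightarrow> 'k)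
    \<Rightarrow> nat \<Rightarrow> real^'k" where
  "mu_ATT M D Y0 Y1 t = cexp M (\<lambda>\<omega>. ind_vec (Y1 t \<omega>) - ind_vec (Y0 t \<omega>)) (treated M D)"

definition mu_DiD :: "'a measure \<Rightarrow> nat \<Rightarrow> ('a \<Rightarrow> bool) \<Rightarrow> (nat \<Rightarrow> 'a \<Rightarrow> 'k::finite)
    \<Rightarrow> (nat \<Rightarrow> 'a \<Rightarrow> 'k) \<Rightarrow> nat \<Rightarrow> real^'k" where
  "mu_DiD M T0 D Y0 Y1 t =
     cexp M (\<lambda>\<omega>. Xobs T0 D Y0 Y1 t \<omega> - Xobs T0 D Y0 Y1 T0 \<omega>) (treated M D)
   - cexp M (\<lambda>\<omega>. Xobs T0 D Y0 Y1 t \<omega> - Xobs T0 D Y0 Y1 T0 \<omega>) (control M D)"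

end

theory Submission imports Defs begin

lemma ind_vec_axis: "ind_vec y = axis y (1::real)"
  by (simp add: ind_vec_def axis_def vec_eq_iff eq_commute)

lemma ind_vec_meas: "Y \<in> M \<rightarrow>\<^sub>M count_space UNIV \<Longrightarrow> (\<lambda>\<omega>. ind_vec (Y \<omega>)) \<in> borel_measurable M"
  by (rule measurable_compose[of Y M "count_space UNIV"]) auto

lemma cexp_nth:
  assumes "prob_space M" "X \<in> borel_measurable M" "B \<in> sets M" "\<And>\<omega>. norm (X \<omega>) \<le> C"
  shows "cexp M X B $ k = (\<integral>\<omega>. indicator B \<omega> * X \<omega> $ k \<partial>M) / measure M B"
proof -
  interpret prob_space M by fact
  have int: "integrable M (\<lambda>\<omega>. indicator B \<omega> *\<^sub>R X \<omega>)"
  proof (rule integrable_const_bound[where B=C])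
    have "0 \<le> C" using order_trans[OF norm_ge_zero assms(4)] .
    then show "AE x in M. norm (indicator B x *\<^sub>R X x) \<le> C"
      using assms(4) by (auto simp: indicator_def)
    show "(\<lambda>\<omega>. indicator B \<omega> *\<^sub>R X \<omega>) \<in> borel_measurable M"
      using assms(2,3) by (intro borel_measurable_scaleR borel_measurable_indicator)
  qed
  have "(\<integral>\<omega>. indicator B \<omega> *\<^sub>R X \<omega> \<partial>M) $ k = (\<integral>\<omega>. (indicator B \<omega> *\<^sub>R X \<omega>) $ k \<partial>M)"
    using integral_bounded_linear[OF bounded_linear_vec_nth int, of k] by (rule sym)
  then have e: "(\<integral>\<omega>. indicator B \<omega> *\<^sub>R X \<omega> \<partial>M) $ k = (\<integral>\<omega>. indicator B \<omega> * X \<omega> $ k \<partial>M)"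
    by (simp only: vector_scaleR_component real_scaleR_def)
  show ?thesis unfolding cexp_def vector_scaleR_component e real_scaleR_def by simp
qed

lemma cexp_ind:
  assumes "prob_space M" "Y \<in> M \<rightarrow>\<^sub>M count_space UNIV" "Z \<in> M \<rightarrow>\<^sub>M count_space UNIV" "B \<in> sets M"
  shows "cexp M (\<lambda>\<omega>. ind_vec (Y \<omega>) - ind_vec (Z \<omega>)) B $ k =
     (measure M (B \<inter> {\<omega>\<in>space M. Y \<omega> = k}) - measure M (B \<inter> {\<omega>\<in>space M. Z \<omega> = k})) / measure M B"
proof -
  interpret prob_space M by fact
  have mY: "{\<omega>\<in>space M. Y \<omega> = k} \<in> sets M"
  proof -
    have "Y -` {k} \<inter> space M \<in> sets M" by (rule measurable_sets[OF assms(2)]) auto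
    moreover have "{\<omega>\<in>space M. Y \<omega> = k} = Y -` {k} \<inter> space M" by auto
    ultimately show ?thesis by simp
  qed
  have mZ: "{\<omega>\<in>space M. Z \<omega> = k} \<in> sets M"
  proof -
    have "Z -` {k} \<inter> space M \<in> sets M" by (rule measurable_sets[OF assms(3)]) auto
    moreover have "{\<omega>\<in>space M. Z \<omega> = k} = Z -` {k} \<inter> space M" by auto
    ultimately show ?thesis by simp
  qed
  have "cexp M (\<lambda>\<omega>. ind_vec (Y \<omega>) - ind_vec (Z \<omega>)) B $ k =
     (\<integral>\<omega>. indicator B \<omega> * (ind_vec (Y \<omega>) - ind_vec (Z \<omega>)) $ k \<partial>M) / measure M B"
  proof (rule cexp_nth[where C=2, OF assms(1) _ assms(4)])
    show "(\<lambda>\<omega>. ind_vec (Y \<omega>) - ind_vec (Z \<omega>)) \<in> borel_measurable M"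
      using ind_vec_meas[OF assms(2)] ind_vec_meas[OF assms(3)] by (rule borel_measurable_diff)
    fix \<omega>
    have "norm (ind_vec (Y \<omega>) - ind_vec (Z \<omega>)) \<le> norm (ind_vec (Y \<omega>)) + norm (ind_vec (Z \<omega>))"
      by (rule norm_triangle_ineq4)
    then show "norm (ind_vec (Y \<omega>) - ind_vec (Z \<omega>)) \<le> 2" by (simp add: ind_vec_axis)
  qed
  also have "(\<integral>\<omega>. indicator B \<omega> * (ind_vec (Y \<omega>) - ind_vec (Z \<omega>)) $ k \<partial>M)
     = (\<integral>\<omega>. indicator (B \<inter> {\<omega>\<in>space M. Y \<omega> = k}) \<omega> - indicator (B \<inter> {\<omega>\<in>space M. Z \<omega> = k}) \<omega> \<partial>M)"
    by (rule Bochner_Integration.integral_cong) (auto simp: ind_vec_def indicator_def)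
  also have "\<dots> = measure M (B \<inter> {\<omega>\<in>space M. Y \<omega> = k}) - measure M (B \<inter> {\<omega>\<in>space M. Z \<omega> = k})"
    using mY mZ assms(4) by (subst Bochner_Integration.integral_diff) (auto intro!: integrable_real_indicator simp: less_top[symmetric])
  finally show ?thesis .
qed

lemma eq_sets:
  assumes "Y \<in> M \<rightarrow>\<^sub>M count_space UNIV"
  shows "{\<omega>\<in>space M. Y \<omega> = k} \<in> sets M"
proof -
  have "Y -` {k} \<inter> space M \<in> sets M" by (rule measurable_sets[OF assms]) auto
  moreover have "{\<omega>\<in>space M. Y \<omega> = k} = Y -` {k} \<inter> space M" by auto
  ultimately show ?thesis by simp
qed

lemma hist_sets:
  assumes "\<And>s. Y s \<in> M \<rightarrow>\<^sub>M count_space UNIV"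
  shows "hist_event M Y T0 h \<in> sets M"
  unfolding hist_event_def
  by (rule sets.sets_Collect_finite_All) (auto intro: eq_sets[OF assms])

lemma hist_sum:
  fixes Y :: "nat \<Rightarrow> 'a \<Rightarrow> 'k::finite"
  assumes "prob_space M" "\<And>s. Y s \<in> M \<rightarrow>\<^sub>M count_space UNIV" "S \<in> sets M"
  shows "(\<Sum>h\<in>histories T0. measure M (hist_event M Y T0 h \<inter> S)) = measure M S"
proof -
  interpret prob_space M by fact
  have fin: "finite (histories T0 :: (nat \<Rightarrow> 'k) set)"
    unfolding histories_def by (rule finite_PiE) auto
  have "measure M (\<Union>h\<in>histories T0. hist_event M Y T0 h \<inter> S) = (\<Sum>h\<in>histories T0. measure M (hist_event M Y T0 h \<inter> S))"
  proof (rule finite_measure_finite_Union[OF fin])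
    show "(\<lambda>h. hist_event M Y T0 h \<inter> S) ` histories T0 \<subseteq> sets M"
      using hist_sets[OF assms(2)] assms(3) by auto
    show "disjoint_family_on (\<lambda>h. hist_event M Y T0 h \<inter> S) (histories T0)"
      unfolding disjoint_family_on_def
    proof (intro ballI impI)
      fix h h' :: "nat \<Rightarrow> 'k" assume h: "h \<in> histories T0" and h': "h' \<in> histories T0" and ne: "h \<noteq> h'"
      then obtain s where "s \<in> {1..T0}" "h s \<noteq> h' s"
        using PiE_ext[of h "{1..T0}" "\<lambda>_. UNIV" h'] unfolding histories_def by blast
      then show "hist_event M Y T0 h \<inter> S \<inter> (hist_event M Y T0 h' \<inter> S) = {}"
        unfolding hist_event_def by auto
    qed
  qed
  moreover have "(\<Union>h\<in>histories T0. hist_event M Y T0 h \<inter> S) = S"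
  proof
    show "(\<Union>h\<in>histories T0. hist_event M Y T0 h \<inter> S) \<subseteq> S" by auto
    show "S \<subseteq> (\<Union>h\<in>histories T0. hist_event M Y T0 h \<inter> S)"
    proof
      fix \<omega> assume w: "\<omega> \<in> S"
      then have ws: "\<omega> \<in> space M" using sets.sets_into_space[OF assms(3)] by auto
      let ?h = "restrict (\<lambda>s. Y s \<omega>) {1..T0}"
      have "?h \<in> histories T0" unfolding histories_def by auto
      moreover have "\<omega> \<in> hist_event M Y T0 ?h" unfolding hist_event_def using ws by auto
      ultimately show "\<omega> \<in> (\<Union>h\<in>histories T0. hist_event M Y T0 h \<inter> S)" using w by blast
    qed
  qed
  ultimately show ?thesis by simp
qed

lemma alg:
  fixes a a' b c e p q :: real
  assumes "0 \<le> a'" "a' \<le> a" "0 \<le> c" "c \<le> b" "b = 0 \<Longrightarrow> a = 0"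
    "0 < a \<Longrightarrow> 0 < b \<Longrightarrow> a' / a = c / b"
  shows "(a/p - b/q) * ((c - e*b)/b) = (a' - e*a)/p - (c - e*b)/q"
proof (cases "b = 0")
  case True
  then show ?thesis using assms by auto
next
  case False
  then have b: "0 < b" using assms by auto
  show ?thesis
  proof (cases "a = 0")
    case True
    then have "a' = 0" using assms by auto
    then show ?thesis using True b by (cases "p = 0"; cases "q = 0") (simp_all add: field_simps)
  next
    case False
    then have "0 < a" using assms by auto
    then have "a' = a * c / b" using assms(6)[OF _ b] by (simp add: field_simps)
    then show ?thesis using b by (cases "p = 0"; cases "q = 0") (simp_all add: field_simps)
  qed
qed

theorem proposition3:
  fixes M :: "'a measure" and D :: "'a \<Rightarrow> bool"
    and Y0 Y1 :: "nat \<Rightarrow> 'a \<Rightarrow> 'k::finite"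
    and T0 T1 T t :: nat
  assumes "prob_space M"
    and "T0 \<ge> 1" and "T1 \<ge> 1" and "T = T0 + T1" and "CARD('k) \<ge> 2"
    and "D \<in> M \<rightarrow>\<^sub>M count_space UNIV"
    and "\<And>s. Y0 s \<in> M \<rightarrow>\<^sub>M count_space UNIV"
    and "\<And>s. Y1 s \<in> M \<rightarrow>\<^sub>M count_space UNIV"
    \<comment> \<open>no anticipation\<close>
    and no_anticipation: "\<And>s \<omega>. s \<in> {1..T0} \<Longrightarrow> \<omega> \<in> space M \<Longrightarrow> Y1 s \<omega> = Y0 s \<omega>"
    \<comment> \<open>common support\<close>
    and common_support: "\<exists>\<epsilon>>0. \<forall>h\<in>histories T0.
          measure M (hist_event M (Yobs T0 D Y0 Y1) T0 h) > 0 \<longrightarrow>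
            \<epsilon> \<le> cprob M (treated M D) (hist_event M (Yobs T0 D Y0 Y1) T0 h) \<and>
            cprob M (treated M D) (hist_event M (Yobs T0 D Y0 Y1) T0 h) < 1 - \<epsilon>"
    \<comment> \<open>transition independence\<close>
    and transition_indep: "\<And>s x h. s \<in> {T0+1..T} \<Longrightarrow> h \<in> histories T0 \<Longrightarrow>
          measure M (hist_event M Y0 T0 h \<inter> treated M D) > 0 \<Longrightarrow>
          measure M (hist_event M Y0 T0 h \<inter> control M D) > 0 \<Longrightarrow>
          cprob M {\<omega> \<in> space M. Y0 s \<omega> = x} (hist_event M Y0 T0 h \<inter> treated M D)
          = cprob M {\<omega> \<in> space M. Y0 s \<omega> = x} (hist_event M Y0 T0 h \<inter> control M D)"
    and "t \<in> {T0+1..T}"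
  shows "mu_DiD M T0 D Y0 Y1 t - mu_ATT M D Y0 Y1 t =
    (\<Sum>h\<in>histories T0.
       (cprob M (hist_event M (Yobs T0 D Y0 Y1) T0 h) (treated M D)
        - cprob M (hist_event M (Yobs T0 D Y0 Y1) T0 h) (control M D))
       *\<^sub>R cexp M (\<lambda>\<omega>. Xobs T0 D Y0 Y1 t \<omega> - ind_vec (h T0))
              (hist_event M (Yobs T0 D Y0 Y1) T0 h \<inter> control M D))"
proof -
  interpret prob_space M by fact
  note mY0 = assms(7) and mY1 = assms(8)
  define Tr where "Tr = treated M D"
  define Co where "Co = control M D"
  define H where "H = hist_event M Y0 T0"
  have mD: "{\<omega>\<in>space M. D \<omega> = True} \<in> sets M" using eq_sets[OF assms(6)] .
  then have mD': "{\<omega>\<in>space M. D \<omega>} \<in> sets M" by simp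
  then have Tr_sets: "Tr \<in> sets M" unfolding Tr_def treated_def by simp
  have Co_sets: "Co \<in> sets M" unfolding Co_def control_def
    using eq_sets[OF assms(6), of False] by simp
  have H_sets: "\<And>h. H h \<in> sets M" unfolding H_def by (rule hist_sets[OF mY0])
  have Hobs: "\<And>h. hist_event M (Yobs T0 D Y0 Y1) T0 h = H h"
    by (auto simp: hist_event_def Yobs_def H_def)
  have mYobs: "\<And>s. Yobs T0 D Y0 Y1 s \<in> M \<rightarrow>\<^sub>M count_space UNIV"
    unfolding Yobs_def
    by (intro measurable_If mY0 mY1) (simp_all add: mD')
  have tT: "T0 < t" "t \<le> T" using assms(12) by auto
  have T0in: "T0 \<in> {1..T0}" using assms(2) by auto
  obtain \<epsilon> where eps: "\<epsilon> > 0" and epsH: "\<And>h. h \<in> histories T0 \<Longrightarrow> measure M (H h) > 0 \<Longrightarrow>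
       cprob M Tr (H h) < 1 - \<epsilon>"
    using common_support unfolding Hobs Tr_def[symmetric] by blast
  show ?thesis
  proof (rule iffD2[OF vec_eq_iff], rule allI)
    fix k
    define A where "A = {\<omega>\<in>space M. Y0 t \<omega> = k}"
    define B where "B = {\<omega>\<in>space M. Y0 T0 \<omega> = k}"
    define A1 where "A1 = {\<omega>\<in>space M. Y1 t \<omega> = k}"
    have A_sets: "A \<in> sets M" unfolding A_def by (rule eq_sets[OF mY0])
    have B_sets: "B \<in> sets M" unfolding B_def by (rule eq_sets[OF mY0])
    have e1: "Tr \<inter> {\<omega>\<in>space M. Yobs T0 D Y0 Y1 t \<omega> = k} = Tr \<inter> A1"
      using tT by (auto simp: Tr_def treated_def Yobs_def A1_def)
    have e2: "Co \<inter> {\<omega>\<in>space M. Yobs T0 D Y0 Y1 t \<omega> = k} = Co \<inter> A"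
      using tT by (auto simp: Co_def control_def Yobs_def A_def)
    have e3: "{\<omega>\<in>space M. Yobs T0 D Y0 Y1 T0 \<omega> = k} = B"
      by (auto simp: Yobs_def B_def)
    have c1: "cexp M (\<lambda>\<omega>. Xobs T0 D Y0 Y1 t \<omega> - Xobs T0 D Y0 Y1 T0 \<omega>) Tr $ k
        = (measure M (Tr \<inter> A1) - measure M (Tr \<inter> B)) / measure M Tr"
      unfolding Xobs_def using cexp_ind[OF assms(1) mYobs[of t] mYobs[of T0] Tr_sets, of k]
      by (simp only: e1 e3)
    have c2: "cexp M (\<lambda>\<omega>. Xobs T0 D Y0 Y1 t \<omega> - Xobs T0 D Y0 Y1 T0 \<omega>) Co $ k
        = (measure M (Co \<inter> A) - measure M (Co \<inter> B)) / measure M Co"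
      unfolding Xobs_def using cexp_ind[OF assms(1) mYobs[of t] mYobs[of T0] Co_sets, of k]
      by (simp only: e2 e3)
    have c3: "cexp M (\<lambda>\<omega>. ind_vec (Y1 t \<omega>) - ind_vec (Y0 t \<omega>)) Tr $ k
        = (measure M (Tr \<inter> A1) - measure M (Tr \<inter> A)) / measure M Tr"
      using cexp_ind[OF assms(1) mY1[of t] mY0[of t] Tr_sets, of k]
      unfolding A_def A1_def .
    have L: "(mu_DiD M T0 D Y0 Y1 t - mu_ATT M D Y0 Y1 t) $ k =
       (measure M (Tr \<inter> A) - measure M (Tr \<inter> B)) / measure M Tr
       - (measure M (Co \<inter> A) - measure M (Co \<inter> B)) / measure M Co"
      unfolding mu_DiD_def mu_ATT_def Tr_def[symmetric] Co_def[symmetric] vector_minus_component c1 c2 c3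
      by (simp add: diff_divide_distrib)
    have R: "(\<Sum>h\<in>histories T0.
       (cprob M (hist_event M (Yobs T0 D Y0 Y1) T0 h) (treated M D)
        - cprob M (hist_event M (Yobs T0 D Y0 Y1) T0 h) (control M D))
       *\<^sub>R cexp M (\<lambda>\<omega>. Xobs T0 D Y0 Y1 t \<omega> - ind_vec (h T0))
              (hist_event M (Yobs T0 D Y0 Y1) T0 h \<inter> control M D)) $ k
       = (\<Sum>h\<in>histories T0. (measure M (H h \<inter> (Tr \<inter> A)) - measure M (H h \<inter> (Tr \<inter> B))) / measure M Tr
            - (measure M (H h \<inter> (Co \<inter> A)) - measure M (H h \<inter> (Co \<inter> B))) / measure M Co)"
      unfolding sum_component Hobs Tr_def[symmetric] Co_def[symmetric] vector_scaleR_component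
    proof (rule sum.cong[OF refl])
      fix h :: "nat \<Rightarrow> 'k" assume h: "h \<in> histories T0"
      have HC: "H h \<inter> Co \<in> sets M" using H_sets Co_sets by auto
      have HT: "H h \<inter> Tr \<in> sets M" using H_sets Tr_sets by auto
      have Hsp: "H h \<subseteq> space M" by (auto simp: H_def hist_event_def)
      have HT0: "\<And>\<omega>. \<omega> \<in> H h \<Longrightarrow> Y0 T0 \<omega> = h T0"
        using T0in by (auto simp: H_def hist_event_def)
      define e :: real where "e = (if h T0 = k then 1 else 0)"
      define a where "a = measure M (H h \<inter> Tr)"
      define b where "b = measure M (H h \<inter> Co)"
      define c where "c = measure M (H h \<inter> (Co \<inter> A))"
      define a' where "a' = measure M (H h \<inter> (Tr \<inter> A))"
      have s1: "(H h \<inter> Co) \<inter> {\<omega>\<in>space M. Yobs T0 D Y0 Y1 t \<omega> = k} = H h \<inter> (Co \<inter> A)"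
        using tT by (auto simp: Co_def control_def Yobs_def A_def)
      have s2: "(H h \<inter> Co) \<inter> {\<omega>\<in>space M. h T0 = k} = H h \<inter> (Co \<inter> B)"
        using HT0 Hsp by (auto simp: Co_def control_def B_def)
      have c4: "cexp M (\<lambda>\<omega>. Xobs T0 D Y0 Y1 t \<omega> - ind_vec (h T0)) (H h \<inter> Co) $ k
          = (c - measure M (H h \<inter> (Co \<inter> B))) / b"
        unfolding Xobs_def c_def b_def
        using cexp_ind[OF assms(1) mYobs[of t] measurable_const[of "h T0"] HC, of k]
        by (simp only: s1 s2 space_count_space UNIV_I simp_thms)
      have eTr: "measure M (H h \<inter> (Tr \<inter> B)) = e * a"
      proof -
        have "H h \<inter> (Tr \<inter> B) = (if h T0 = k then H h \<inter> Tr else {})"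
          using HT0 Hsp by (auto simp: B_def Tr_def treated_def)
        then show ?thesis by (simp add: e_def a_def)
      qed
      have eCo: "measure M (H h \<inter> (Co \<inter> B)) = e * b"
      proof -
        have "H h \<inter> (Co \<inter> B) = (if h T0 = k then H h \<inter> Co else {})"
          using HT0 Hsp by (auto simp: B_def Co_def control_def)
        then show ?thesis by (simp add: e_def b_def)
      qed
      have "0 \<le> a'" unfolding a'_def by simp
      moreover have "a' \<le> a" unfolding a'_def a_def
        by (rule finite_measure_mono) (use HT in auto)
      moreover have "0 \<le> c" unfolding c_def by simp
      moreover have "c \<le> b" unfolding c_def b_def
        by (rule finite_measure_mono) (use HC in auto)
      moreover have "a = 0" if b0: "b = 0"
      proof (rule ccontr)
        assume "a \<noteq> 0"
        then have apos: "0 < a" unfolding a_def by (simp add: zero_less_measure_iff)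
        have "H h = (H h \<inter> Tr) \<union> (H h \<inter> Co)" using Hsp by (auto simp: Tr_def treated_def Co_def control_def)
        moreover have "(H h \<inter> Tr) \<inter> (H h \<inter> Co) = {}" by (auto simp: Tr_def treated_def Co_def control_def)
        ultimately have "measure M (H h) = a + b" unfolding a_def b_def
          using finite_measure_Union[OF HT HC] by simp
        then have mH: "measure M (H h) = a" using b0 by simp
        have "cprob M Tr (H h) < 1 - \<epsilon>" using epsH[OF h] mH apos by simp
        moreover have "cprob M Tr (H h) = 1"
          unfolding cprob_def mH using apos by (simp add: a_def Int_commute)
        ultimately show False using eps by simp
      qed
      moreover have "a' / a = c / b" if "0 < a" "0 < b"
      proof -
        have "cprob M A (H h \<inter> Tr) = cprob M A (H h \<inter> Co)"
          using transition_indep[OF assms(12) h, of k] that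
          unfolding H_def[symmetric] Tr_def[symmetric] Co_def[symmetric] A_def[symmetric] a_def b_def by simp
        moreover have "A \<inter> (H h \<inter> Tr) = H h \<inter> (Tr \<inter> A)" "A \<inter> (H h \<inter> Co) = H h \<inter> (Co \<inter> A)" by auto
        ultimately show ?thesis unfolding cprob_def a'_def c_def a_def b_def by simp
      qed
      ultimately have "(a / measure M Tr - b / measure M Co) * ((c - e * b) / b)
         = (a' - e * a) / measure M Tr - (c - e * b) / measure M Co"
        by (rule alg)
      then show "(cprob M (H h) Tr - cprob M (H h) Co) *\<^sub>R cexp M (\<lambda>\<omega>. Xobs T0 D Y0 Y1 t \<omega> - ind_vec (h T0)) (H h \<inter> Co) $ k
         = (measure M (H h \<inter> (Tr \<inter> A)) - measure M (H h \<inter> (Tr \<inter> B))) / measure M Tr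
            - (measure M (H h \<inter> (Co \<inter> A)) - measure M (H h \<inter> (Co \<inter> B))) / measure M Co"
        unfolding real_scaleR_def c4 eTr eCo cprob_def a_def[symmetric] b_def[symmetric] c_def[symmetric] a'_def[symmetric] .
    qed
    have sTA: "(\<Sum>h\<in>histories T0. measure M (H h \<inter> S)) = measure M S" if "S \<in> sets M" for S
      unfolding H_def by (rule hist_sum[OF assms(1) mY0 that])
    have "(\<Sum>h\<in>histories T0. (measure M (H h \<inter> (Tr \<inter> A)) - measure M (H h \<inter> (Tr \<inter> B))) / measure M Tr
            - (measure M (H h \<inter> (Co \<inter> A)) - measure M (H h \<inter> (Co \<inter> B))) / measure M Co)
      = (measure M (Tr \<inter> A) - measure M (Tr \<inter> B)) / measure M Tr
       - (measure M (Co \<inter> A) - measure M (Co \<inter> B)) / measure M Co"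
      unfolding sum_subtractf sum_divide_distrib[symmetric]
      using sTA Tr_sets Co_sets A_sets B_sets by simp
    then show "(mu_DiD M T0 D Y0 Y1 t - mu_ATT M D Y0 Y1 t) $ k = (\<Sum>h\<in>histories T0.
       (cprob M (hist_event M (Yobs T0 D Y0 Y1) T0 h) (treated M D)
        - cprob M (hist_event M (Yobs T0 D Y0 Y1) T0 h) (control M D))
       *\<^sub>R cexp M (\<lambda>\<omega>. Xobs T0 D Y0 Y1 t \<omega> - ind_vec (h T0))
              (hist_event M (Yobs T0 D Y0 Y1) T0 h \<inter> control M D)) $ k"
      using L R by simp
  qed
qed

end
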